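(* Let $\mathcal{G}$ be a graph on $N$ vertices with adjacency matrix $\mathbf{A}$, used as the shift operator, and let $\underline{x}$ be a random process over the vertices of $\mathcal{G}$ with covariance matrix $\mathbf{C}$. Then $\underline{x}$ is superstationary if and only if $\mathbf{A}$ and $\mathbf{C}$ supercommute.
   Context: A random process $\underline{x}$ (a random vector indexed by the vertices) with covariance matrix $\mathbf{C}$, defined over a graph with shift operator $\mathbf{S}$ (here the adjacency matrix), is called graph wide-sense stationary (GWSS) if $\mathbf{C}$ and $\mathbf{S}$ are jointly diagonalizable, i.e. have a common set of eigenvectors. For a subset $V'$ of the vertices, the subgraph on $V'$ has as adjacency matrix the principal submatrix of $\mathbf{A}$ with rows and columns indexed by $V'$, and the subprocess over it is the restriction of $\underline{x}$ to $V'$, whose covariance matrix is the corresponding principal submatrix of $\mathbf{C}$. The process $\underline{x}$ is superstationary if (i) $\underline{x}$ is GWSS over $\mathcal{G}$, and (ii) for every such subgraph, the subprocess over it is GWSS with respect to the subgraph's adjacency matrix. Two square matrices $\mathbf{B}_1,\mathbf{B}_2$ of the same size supercommute if $\mathbf{B}_1\mathbf{B}_2=\mathbf{B}_2\mathbf{B}_1$ and, for every set of indices, the principal submatrix of $\mathbf{B}_1$ on those indices commutes with the corresponding principal submatrix of $\mathbf{B}_2$. *)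

theory Defs
  imports "Jordan_Normal_Form.Char_Poly" "Jordan_Normal_Form.DL_Submatrix"
begin

definition adjacency_matrix :: "nat \<Rightarrow> real mat \<Rightarrow> bool" where
  "adjacency_matrix N A \<longleftrightarrow> A \<in> carrier_mat N N \<and> A\<^sup>T = A \<and>
     (\<forall>i<N. \<forall>j<N. A $$ (i,j) = 0 \<or> A $$ (i,j) = 1) \<and> (\<forall>i<N. A $$ (i,i) = 0)"

definition covariance_matrix :: "nat \<Rightarrow> real mat \<Rightarrow> bool" where
  "covariance_matrix N C \<longleftrightarrow> C \<in> carrier_mat N N \<and> C\<^sup>T = C \<and>
     (\<forall>v \<in> carrier_vec N. v \<bullet> (C *\<^sub>v v) \<ge> 0)"

definition jointly_diagonalizable :: "real mat \<Rightarrow> real mat \<Rightarrow> bool" where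
  "jointly_diagonalizable B1 B2 \<longleftrightarrow>
     (\<exists>n. B1 \<in> carrier_mat n n \<and> B2 \<in> carrier_mat n n \<and>
        (\<exists>P. P \<in> carrier_mat n n \<and> invertible_mat P \<and>
           (\<forall>j<n. (\<exists>k. eigenvector B1 (col P j) k) \<and> (\<exists>k. eigenvector B2 (col P j) k))))"

definition GWSS :: "real mat \<Rightarrow> real mat \<Rightarrow> bool" where
  "GWSS S C \<longleftrightarrow> jointly_diagonalizable C S"

definition superstationary :: "nat \<Rightarrow> real mat \<Rightarrow> real mat \<Rightarrow> bool" where
  "superstationary N A C \<longleftrightarrow> GWSS A C \<and>
     (\<forall>V' \<subseteq> {0..<N}. GWSS (submatrix A V' V') (submatrix C V' V'))"

definition supercommute :: "nat \<Rightarrow> real mat \<Rightarrow> real mat \<Rightarrow> bool" where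
  "supercommute N B1 B2 \<longleftrightarrow> B1 * B2 = B2 * B1 \<and>
     (\<forall>I \<subseteq> {0..<N}. submatrix B1 I I * submatrix B2 I I = submatrix B2 I I * submatrix B1 I I)"

end

theory Submission imports Defs "Jordan_Normal_Form.Schur_Decomposition" "Jordan_Normal_Form.Spectral_Radius" begin

lemma sym_real_eigenvector:
  fixes A :: "real mat"
  assumes A: "A \<in> carrier_mat n n" and sym: "A\<^sup>T = A" and n: "n > 0"
  shows "\<exists>v e. eigenvector A v e"
proof -
  let ?Ac = "map_mat complex_of_real A"
  have Ac: "?Ac \<in> carrier_mat n n" using A by auto
  from spectrum_non_empty[OF Ac n] obtain l where "eigenvalue ?Ac l" by (auto simp: spectrum_def)
  then obtain v where ev: "eigenvector ?Ac v l" unfolding eigenvalue_def by auto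
  hence v: "v \<in> carrier_vec n" "v \<noteq> 0\<^sub>v n" "?Ac *\<^sub>v v = l \<cdot>\<^sub>v v" unfolding eigenvector_def using Ac by auto
  have Aij: "A $$ (i,j) = A $$ (j,i)" if "i < n" "j < n" for i j
    using arg_cong[OF sym, of "\<lambda>M. M $$ (i,j)"] that A by auto
  have row: "(\<Sum>j = 0..<n. complex_of_real (A$$(i,j)) * v$j) = l * v$i" if i: "i < n" for i
  proof -
    have "(?Ac *\<^sub>v v) $ i = (l \<cdot>\<^sub>v v) $ i" using v(3) by simp
    thus ?thesis using i A v(1) by (simp add: scalar_prod_def)
  qed
  define s where "s = (\<Sum>i = 0..<n. cnj (v$i) * (\<Sum>j = 0..<n. complex_of_real (A$$(i,j)) * v$j))"
  define t where "t = (\<Sum>i = 0..<n. cnj (v$i) * v$i)"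
  have "s = (\<Sum>i = 0..<n. cnj (v$i) * (l * v$i))" unfolding s_def
    by (rule sum.cong, simp, simp add: row)
  hence st: "s = l * t" unfolding t_def sum_distrib_left by (simp add: ac_simps)
  have "cnj s = (\<Sum>i = 0..<n. \<Sum>j = 0..<n. v$i * complex_of_real (A$$(i,j)) * cnj (v$j))"
    unfolding s_def by (simp add: sum_distrib_left mult.assoc)
  also have "\<dots> = (\<Sum>j = 0..<n. \<Sum>i = 0..<n. v$i * complex_of_real (A$$(i,j)) * cnj (v$j))"
    by (rule sum.swap)
  also have "\<dots> = s" unfolding s_def sum_distrib_left
    by (intro sum.cong refl, auto simp: Aij mult.commute mult.left_commute)
  finally have cs: "cnj s = s" .
  have ct: "cnj t = t" unfolding t_def by (simp add: mult.commute)
  obtain i where i: "i < n" "v $ i \<noteq> 0" using v(1,2) by force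
  have "Re t = (\<Sum>i = 0..<n. (Re (v$i))^2 + (Im (v$i))^2)" unfolding t_def
    by (simp add: power2_eq_square)
  moreover have "(\<Sum>i = 0..<n. (Re (v$i))^2 + (Im (v$i))^2) > 0"
    by (rule sum_pos2[of _ i], insert i, auto simp: complex_eq_iff sum_power2_gt_zero_iff)
  ultimately have t0: "t \<noteq> 0" by auto
  have l: "l = s / t" using st t0 by simp
  have "cnj l = l" unfolding l using cs ct by simp
  hence "Im l = 0" by (metis Reals_cnj_iff complex_is_Real_iff)
  hence lr: "l = complex_of_real (Re l)" by (simp add: complex_eq_iff)
  have "eigenvalue ?Ac (complex_of_real (Re l))" using ev lr unfolding eigenvalue_def by auto
  hence "poly (char_poly ?Ac) (complex_of_real (Re l)) = 0"
    using eigenvalue_root_char_poly[OF Ac] by auto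
  hence "poly (char_poly A) (Re l) = 0"
    unfolding of_real_hom.char_poly_hom[OF A] of_real_hom.poly_map_poly by simp
  hence "eigenvalue A (Re l)" using eigenvalue_root_char_poly[OF A] by auto
  thus ?thesis unfolding eigenvalue_def by auto
qed

lemma reduce_block:
  fixes A W :: "real mat"
  assumes A: "A \<in> carrier_mat (Suc m) (Suc m)" and W: "W \<in> carrier_mat (Suc m) (Suc m)"
    and WtW: "W\<^sup>T * W = 1\<^sub>m (Suc m)" and sym: "A\<^sup>T = A" and ev: "A *\<^sub>v col W 0 = a \<cdot>\<^sub>v col W 0"
  shows "W\<^sup>T * A * W = four_block_mat (mat 1 1 (\<lambda>_. a)) (0\<^sub>m 1 m) (0\<^sub>m m 1)
           (mat m m (\<lambda>(i,j). (W\<^sup>T * A * W) $$ (Suc i, Suc j)))" (is "?A' = ?B")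
    and "(mat m m (\<lambda>(i,j). (W\<^sup>T * A * W) $$ (Suc i, Suc j)))\<^sup>T = mat m m (\<lambda>(i,j). (W\<^sup>T * A * W) $$ (Suc i, Suc j))"
proof -
  have Wt: "W\<^sup>T \<in> carrier_mat (Suc m) (Suc m)" using W by auto
  have A': "?A' \<in> carrier_mat (Suc m) (Suc m)" using W A by auto
  have symA': "?A'\<^sup>T = ?A'"
  proof -
    have "?A'\<^sup>T = W\<^sup>T * (W\<^sup>T * A)\<^sup>T" using transpose_mult[of "W\<^sup>T * A" "Suc m" "Suc m" W "Suc m"] W A by auto
    also have "(W\<^sup>T * A)\<^sup>T = A\<^sup>T * W" using transpose_mult[of "W\<^sup>T" "Suc m" "Suc m" A "Suc m"] W A by auto
    finally show ?thesis using sym W A by (simp add: assoc_mult_mat[of _ "Suc m" "Suc m" _ "Suc m" _ "Suc m"])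
  qed
  have sA: "?A' $$ (i,j) = ?A' $$ (j,i)" if "i < Suc m" "j < Suc m" for i j
    using arg_cong[OF symA', of "\<lambda>M. M $$ (j,i)"] that A' by auto
  have c0: "?A' $$ (i,0) = (if i = 0 then a else 0)" if i: "i < Suc m" for i
  proof -
    have "?A' = W\<^sup>T * (A * W)" using W A by auto
    hence "?A' $$ (i,0) = row (W\<^sup>T) i \<bullet> col (A * W) 0" using i W A by (simp)
    also have "\<dots> = col W i \<bullet> (A *\<^sub>v col W 0)" using i W A by (simp add: mult_mat_vec_def)
    also have "\<dots> = a * (col W i \<bullet> col W 0)" unfolding ev using W i by simp
    also have "col W i \<bullet> col W 0 = (W\<^sup>T * W) $$ (i,0)" using W i by simp
    also have "\<dots> = (if i = 0 then 1 else 0)" unfolding WtW using i by simp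
    finally show ?thesis by simp
  qed
  show "?A' = ?B"
  proof (rule eq_matI)
    fix i j assume i: "i < dim_row ?B" and j: "j < dim_col ?B"
    hence i': "i < Suc m" and j': "j < Suc m" by auto
    show "?A' $$ (i,j) = ?B $$ (i,j)"
    proof (cases "j = 0")
      case True thus ?thesis using c0[OF i'] i' by auto
    next
      case False
      show ?thesis
      proof (cases "i = 0")
        case True thus ?thesis using c0[OF j'] sA[OF i' j'] False j' by auto
      next
        case i0: False
        thus ?thesis using False i' j' by auto
      qed
    qed
  qed (insert A', auto)
  show "(mat m m (\<lambda>(i,j). ?A' $$ (Suc i, Suc j)))\<^sup>T = mat m m (\<lambda>(i,j). ?A' $$ (Suc i, Suc j))"
    by (rule eq_matI, auto simp: sA)
qed

lemma orthonormal_completion: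
  fixes v :: "real vec"
  assumes v: "v \<in> carrier_vec n" and v0: "v \<noteq> 0\<^sub>v n"
  shows "\<exists>W k. W \<in> carrier_mat n n \<and> W\<^sup>T * W = 1\<^sub>m n \<and> col W 0 = k \<cdot>\<^sub>v v"
proof -
  have n: "n \<noteq> 0" using v v0 by auto
  interpret cof_vec_space n "TYPE(real)" .
  define b where "b = basis_completion v"
  define ws where "ws = gram_schmidt n b"
  from basis_completion[OF v v0, folded b_def]
  have span_b: "span (set b) = carrier_vec n" and dist_b: "distinct b" 
    and indep: "\<not> lin_dep (set b)" and b: "set b \<subseteq> carrier_vec n" and hdb: "hd b = v" 
    and len_b: "length b = n" by auto
  from hdb len_b n obtain vs where bv: "b = v # vs" by (cases b, auto)
  from gram_schmidt_result[OF b dist_b indep refl, folded ws_def]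
  have ws: "set ws \<subseteq> carrier_vec n" "corthogonal ws" "length ws = n" 
    by (auto simp: len_b)
  from gram_schmidt_hd[OF v, of vs, folded bv] have hdws: "hd ws = v" unfolding ws_def .
  define nz where "nz = (\<lambda>w :: real vec. (1 / sqrt (w \<bullet> w)) \<cdot>\<^sub>v w)"
  define ws' where "ws' = map nz ws"
  define W where "W = mat_of_cols n ws'"
  have wsi: "ws ! i \<in> carrier_vec n" if "i < n" for i using ws that by auto
  have ws'i: "ws' ! i = nz (ws ! i)" if "i < n" for i using ws that unfolding ws'_def by auto
  have ws'c: "set ws' \<subseteq> carrier_vec n" using ws unfolding ws'_def nz_def by auto
  have W: "W \<in> carrier_mat n n" unfolding W_def using ws mat_of_cols_carrier(1)[of n ws'] by (simp add: ws'_def)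
  have colW: "col W i = nz (ws ! i)" if "i < n" for i
    unfolding W_def using that ws ws'c ws'i by (subst col_mat_of_cols, auto simp: ws'_def)
  have orth: "ws ! i \<bullet> ws ! j = 0 \<longleftrightarrow> i \<noteq> j" if "i < n" "j < n" for i j
    using corthogonalD[OF ws(2), of i j] that ws(3) by simp
  have pos: "ws ! i \<bullet> ws ! i > 0" if "i < n" for i
    using orth[OF that that] conjugate_square_ge_0_vec[of "ws ! i"] by simp
  have WtW: "W\<^sup>T * W = 1\<^sub>m n"
  proof (rule eq_matI)
    fix i j assume "i < dim_row (1\<^sub>m n)" "j < dim_col (1\<^sub>m n)"
    hence i: "i < n" and j: "j < n" by auto
    have "(W\<^sup>T * W) $$ (i,j) = col W i \<bullet> col W j" using W i j by simp
    also have "\<dots> = (1 / sqrt (ws ! i \<bullet> ws ! i)) * (1 / sqrt (ws ! j \<bullet> ws ! j)) * (ws ! i \<bullet> ws ! j)"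
      unfolding colW[OF i] colW[OF j] nz_def using wsi[OF i] wsi[OF j]
      by (simp add: smult_scalar_prod_distrib[of _ n])
    also have "\<dots> = 1\<^sub>m n $$ (i,j)"
    proof (cases "i = j")
      case True
      have "sqrt (ws ! j \<bullet> ws ! j) * sqrt (ws ! j \<bullet> ws ! j) = ws ! j \<bullet> ws ! j"
        using pos[OF j] by simp
      thus ?thesis using True i pos[OF j] by (simp add: field_simps)
    next
      case False thus ?thesis using orth[OF i j] i j by simp
    qed
    finally show "(W\<^sup>T * W) $$ (i,j) = 1\<^sub>m n $$ (i,j)" .
  qed (insert W, auto)
  have "col W 0 = nz v" using colW[of 0] n hdws ws(3) by (cases ws, auto)
  thus ?thesis using W WtW unfolding nz_def by blast
qed

lemma joint_diag_gen:
  fixes eq :: bool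
  assumes CE: "\<And>k (A :: real mat) C. A \<in> carrier_mat k k \<Longrightarrow> C \<in> carrier_mat k k \<Longrightarrow> A\<^sup>T = A \<Longrightarrow> C\<^sup>T = C
     \<Longrightarrow> A * C = C * A \<Longrightarrow> (eq \<longrightarrow> A = C) \<Longrightarrow> k > 0 \<Longrightarrow>
     \<exists>v a c. v \<in> carrier_vec k \<and> v \<noteq> 0\<^sub>v k \<and> A *\<^sub>v v = a \<cdot>\<^sub>v v \<and> C *\<^sub>v v = c \<cdot>\<^sub>v v"
  shows "(A :: real mat) \<in> carrier_mat n n \<Longrightarrow> C \<in> carrier_mat n n \<Longrightarrow> A\<^sup>T = A \<Longrightarrow> C\<^sup>T = C \<Longrightarrow> A * C = C * A
    \<Longrightarrow> (eq \<longrightarrow> A = C) \<Longrightarrow>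
    \<exists>P D E. P \<in> carrier_mat n n \<and> P\<^sup>T * P = 1\<^sub>m n \<and> D \<in> carrier_mat n n \<and> E \<in> carrier_mat n n
      \<and> diagonal_mat D \<and> diagonal_mat E \<and> A * P = P * D \<and> C * P = P * E"
proof (induction n arbitrary: A C)
  case 0
  show ?case
    by (rule exI[of _ "1\<^sub>m 0"], rule exI[of _ "0\<^sub>m 0 0"], rule exI[of _ "0\<^sub>m 0 0"],
        insert 0, auto simp: diagonal_mat_def intro!: eq_matI)
next
  case (Suc m A C)
  have A: "A \<in> carrier_mat (Suc m) (Suc m)" and C: "C \<in> carrier_mat (Suc m) (Suc m)"
    and sA: "A\<^sup>T = A" and sC: "C\<^sup>T = C" and AC: "A * C = C * A" and eqAC: "eq \<longrightarrow> A = C"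
    using Suc.prems by auto
  obtain v a c where v: "v \<in> carrier_vec (Suc m)" "v \<noteq> 0\<^sub>v (Suc m)" and Av: "A *\<^sub>v v = a \<cdot>\<^sub>v v"
    and Cv: "C *\<^sub>v v = c \<cdot>\<^sub>v v" using CE[OF A C sA sC AC eqAC] by auto
  obtain W k where W: "W \<in> carrier_mat (Suc m) (Suc m)" and WtW: "W\<^sup>T * W = 1\<^sub>m (Suc m)"
    and c0: "col W 0 = k \<cdot>\<^sub>v v" using orthonormal_completion[OF v] by auto
  have Wt: "W\<^sup>T \<in> carrier_mat (Suc m) (Suc m)" using W by auto
  have WWt: "W * W\<^sup>T = 1\<^sub>m (Suc m)" using mat_mult_left_right_inverse[OF Wt W WtW] .
  have Aw: "A *\<^sub>v col W 0 = a \<cdot>\<^sub>v col W 0" unfolding c0 using A v Av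
    by (metis mult_mat_vec smult_smult_assoc mult.commute)
  have Cw: "C *\<^sub>v col W 0 = c \<cdot>\<^sub>v col W 0" unfolding c0 using C v Cv
    by (metis mult_mat_vec smult_smult_assoc mult.commute)
  define A3 where "A3 = mat m m (\<lambda>(i,j). (W\<^sup>T * A * W) $$ (Suc i, Suc j))"
  define C3 where "C3 = mat m m (\<lambda>(i,j). (W\<^sup>T * C * W) $$ (Suc i, Suc j))"
  define a1 where "a1 = (mat 1 1 (\<lambda>_. a) :: real mat)"
  define c1 where "c1 = (mat 1 1 (\<lambda>_. c) :: real mat)"
  note rA = reduce_block[OF A W WtW sA Aw, folded A3_def a1_def]
  note rC = reduce_block[OF C W WtW sC Cw, folded C3_def c1_def]
  have A3: "A3 \<in> carrier_mat m m" and C3: "C3 \<in> carrier_mat m m"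
    and a1: "a1 \<in> carrier_mat 1 1" and c1: "c1 \<in> carrier_mat 1 1"
    unfolding A3_def C3_def a1_def c1_def by auto
  have "(W\<^sup>T * A * W) * (W\<^sup>T * C * W) = W\<^sup>T * (A * C) * W"
  proof -
    have "(W\<^sup>T * A * W) * (W\<^sup>T * C * W) = W\<^sup>T * A * (W * W\<^sup>T) * C * W"
      using W A C by (simp add: assoc_mult_mat[of _ "Suc m" "Suc m" _ "Suc m" _ "Suc m"])
    also have "\<dots> = W\<^sup>T * (A * C) * W" unfolding WWt using W A C by simp
    finally show ?thesis .
  qed
  moreover have "(W\<^sup>T * C * W) * (W\<^sup>T * A * W) = W\<^sup>T * (C * A) * W"
  proof -
    have "(W\<^sup>T * C * W) * (W\<^sup>T * A * W) = W\<^sup>T * C * (W * W\<^sup>T) * A * W"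
      using W A C by (simp add: assoc_mult_mat[of _ "Suc m" "Suc m" _ "Suc m" _ "Suc m"])
    also have "\<dots> = W\<^sup>T * (C * A) * W" unfolding WWt using W A C by simp
    finally show ?thesis .
  qed
  ultimately have "(W\<^sup>T * A * W) * (W\<^sup>T * C * W) = (W\<^sup>T * C * W) * (W\<^sup>T * A * W)" using AC by simp
  hence blk: "four_block_mat a1 (0\<^sub>m 1 m) (0\<^sub>m m 1) A3 * four_block_mat c1 (0\<^sub>m 1 m) (0\<^sub>m m 1) C3
    = four_block_mat c1 (0\<^sub>m 1 m) (0\<^sub>m m 1) C3 * four_block_mat a1 (0\<^sub>m 1 m) (0\<^sub>m m 1) A3"
    using rA(1) rC(1) by simp
  have AC3: "A3 * C3 = C3 * A3"
  proof (rule eq_matI)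
    fix i j assume "i < dim_row (C3 * A3)" "j < dim_col (C3 * A3)"
    hence i: "i < m" and j: "j < m" using A3 C3 by auto
    from arg_cong[OF blk, of "\<lambda>M. M $$ (Suc i, Suc j)"]
    show "(A3 * C3) $$ (i,j) = (C3 * A3) $$ (i,j)"
      unfolding mult_four_block_mat[OF a1 zero_carrier_mat zero_carrier_mat A3 c1 zero_carrier_mat zero_carrier_mat C3]
        mult_four_block_mat[OF c1 zero_carrier_mat zero_carrier_mat C3 a1 zero_carrier_mat zero_carrier_mat A3]
      using i j A3 C3 a1 c1 by simp
  qed (insert A3 C3, auto)
  have eq3: "eq \<longrightarrow> A3 = C3" using eqAC unfolding A3_def C3_def by auto
  from Suc.IH[OF A3 C3 rA(2)[folded A3_def] rC(2)[folded C3_def] AC3 eq3]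
  obtain P3 D3 E3 where P3: "P3 \<in> carrier_mat m m" and P3o: "P3\<^sup>T * P3 = 1\<^sub>m m"
    and D3: "D3 \<in> carrier_mat m m" and E3: "E3 \<in> carrier_mat m m" and dD3: "diagonal_mat D3"
    and dE3: "diagonal_mat E3" and AP3: "A3 * P3 = P3 * D3" and CP3: "C3 * P3 = P3 * E3" by auto
  define Bd where "Bd = four_block_mat (1\<^sub>m 1) (0\<^sub>m 1 m) (0\<^sub>m m 1) P3"
  define P where "P = W * Bd"
  define D where "D = four_block_mat a1 (0\<^sub>m 1 m) (0\<^sub>m m 1) D3"
  define E where "E = four_block_mat c1 (0\<^sub>m 1 m) (0\<^sub>m m 1) E3"
  have Bd: "Bd \<in> carrier_mat (Suc m) (Suc m)" unfolding Bd_def using P3 by auto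
  have P: "P \<in> carrier_mat (Suc m) (Suc m)" unfolding P_def using W Bd by auto
  have D: "D \<in> carrier_mat (Suc m) (Suc m)" unfolding D_def using D3 a1 by auto
  have E: "E \<in> carrier_mat (Suc m) (Suc m)" unfolding E_def using E3 c1 by auto
  have BdtBd: "Bd\<^sup>T * Bd = 1\<^sub>m (Suc m)"
  proof -
    have "Bd\<^sup>T = four_block_mat (1\<^sub>m 1) (0\<^sub>m 1 m) (0\<^sub>m m 1) P3\<^sup>T"
      unfolding Bd_def by (subst transpose_four_block_mat[of _ 1 1 _ m _ m], insert P3, auto)
    hence "Bd\<^sup>T * Bd = four_block_mat (1\<^sub>m 1) (0\<^sub>m 1 m) (0\<^sub>m m 1) P3\<^sup>T * four_block_mat (1\<^sub>m 1) (0\<^sub>m 1 m) (0\<^sub>m m 1) P3"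
      by (simp add: Bd_def)
    also have "\<dots> = four_block_mat (1\<^sub>m 1) (0\<^sub>m 1 m) (0\<^sub>m m 1) (1\<^sub>m m)"
      by (subst mult_four_block_mat[of _ 1 1 _ m _ m _ _ 1 _ m], insert P3 P3o, auto)
    finally show ?thesis by simp
  qed
  have PtP: "P\<^sup>T * P = 1\<^sub>m (Suc m)"
  proof -
    have "P\<^sup>T = Bd\<^sup>T * W\<^sup>T" unfolding P_def using transpose_mult[OF W Bd] .
    hence "P\<^sup>T * P = Bd\<^sup>T * (W\<^sup>T * W) * Bd" unfolding P_def using W Bd
      by (simp add: assoc_mult_mat[of _ "Suc m" "Suc m" _ "Suc m" _ "Suc m"])
    thus ?thesis unfolding WtW using Bd BdtBd by simp
  qed
  have AW: "A * W = W * (W\<^sup>T * A * W)"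
  proof -
    have "W * (W\<^sup>T * A * W) = (W * W\<^sup>T) * A * W"
      using W A by (simp add: assoc_mult_mat[of _ "Suc m" "Suc m" _ "Suc m" _ "Suc m"])
    thus ?thesis unfolding WWt using A W by simp
  qed
  have CW: "C * W = W * (W\<^sup>T * C * W)"
  proof -
    have "W * (W\<^sup>T * C * W) = (W * W\<^sup>T) * C * W"
      using W C by (simp add: assoc_mult_mat[of _ "Suc m" "Suc m" _ "Suc m" _ "Suc m"])
    thus ?thesis unfolding WWt using C W by simp
  qed
  have bA: "four_block_mat a1 (0\<^sub>m 1 m) (0\<^sub>m m 1) A3 * Bd = Bd * D"
    unfolding Bd_def D_def
    by (subst mult_four_block_mat[of _ 1 1 _ m _ m _ _ 1 _ m], insert a1 A3 P3 D3, auto,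
        subst mult_four_block_mat[of _ 1 1 _ m _ m _ _ 1 _ m], insert a1 A3 P3 D3 AP3, auto)
  have bC: "four_block_mat c1 (0\<^sub>m 1 m) (0\<^sub>m m 1) C3 * Bd = Bd * E"
    unfolding Bd_def E_def
    by (subst mult_four_block_mat[of _ 1 1 _ m _ m _ _ 1 _ m], insert c1 C3 P3 E3, auto,
        subst mult_four_block_mat[of _ 1 1 _ m _ m _ _ 1 _ m], insert c1 C3 P3 E3 CP3, auto)
  have blkcA: "four_block_mat a1 (0\<^sub>m 1 m) (0\<^sub>m m 1) A3 \<in> carrier_mat (Suc m) (Suc m)"
    using a1 A3 four_block_carrier_mat[OF a1 A3] by simp
  have "A * P = (A * W) * Bd" unfolding P_def using A W Bd by simp
  also have "\<dots> = (W * four_block_mat a1 (0\<^sub>m 1 m) (0\<^sub>m m 1) A3) * Bd" using AW rA(1) by simp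
  also have "\<dots> = W * (four_block_mat a1 (0\<^sub>m 1 m) (0\<^sub>m m 1) A3 * Bd)"
    by (rule assoc_mult_mat[OF W blkcA Bd])
  finally have "A * P = W * (four_block_mat a1 (0\<^sub>m 1 m) (0\<^sub>m m 1) A3 * Bd)" .
  hence AP: "A * P = P * D" unfolding bA P_def using W Bd D by simp
  have blkcC: "four_block_mat c1 (0\<^sub>m 1 m) (0\<^sub>m m 1) C3 \<in> carrier_mat (Suc m) (Suc m)"
    using c1 C3 four_block_carrier_mat[OF c1 C3] by simp
  have "C * P = (C * W) * Bd" unfolding P_def using C W Bd by simp
  also have "\<dots> = (W * four_block_mat c1 (0\<^sub>m 1 m) (0\<^sub>m m 1) C3) * Bd" using CW rC(1) by simp
  also have "\<dots> = W * (four_block_mat c1 (0\<^sub>m 1 m) (0\<^sub>m m 1) C3 * Bd)"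
    by (rule assoc_mult_mat[OF W blkcC Bd])
  finally have "C * P = W * (four_block_mat c1 (0\<^sub>m 1 m) (0\<^sub>m m 1) C3 * Bd)" .
  hence CP: "C * P = P * E" unfolding bC P_def using W Bd E by simp
  have dD: "diagonal_mat D" using dD3 D3 a1 unfolding D_def diagonal_mat_def a1_def by auto
  have dE: "diagonal_mat E" using dE3 E3 c1 unfolding E_def diagonal_mat_def c1_def by auto
  show ?case using P PtP D E dD dE AP CP by blast
qed

lemma diag_mult_left:
  fixes G M :: "real mat"
  assumes G: "G \<in> carrier_mat k k" and dG: "diagonal_mat G" and M: "M \<in> carrier_mat k nc"
    and i: "i < k" and j: "j < nc"
  shows "(G * M) $$ (i,j) = G $$ (i,i) * M $$ (i,j)"
proof -
  have "(G * M) $$ (i,j) = (\<Sum>l = 0..<k. G $$ (i,l) * M $$ (l,j))"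
    using G M i j by (simp add: scalar_prod_def)
  also have "\<dots> = (\<Sum>l = 0..<k. if l = i then G $$ (i,i) * M $$ (i,j) else 0)"
    by (rule sum.cong, insert dG G i, auto simp: diagonal_mat_def)
  also have "\<dots> = G $$ (i,i) * M $$ (i,j)" using i by simp
  finally show ?thesis .
qed

lemma diag_mult_right:
  fixes G M :: "real mat"
  assumes G: "G \<in> carrier_mat k k" and dG: "diagonal_mat G" and M: "M \<in> carrier_mat nr k"
    and i: "i < nr" and j: "j < k"
  shows "(M * G) $$ (i,j) = M $$ (i,j) * G $$ (j,j)"
proof -
  have "(M * G) $$ (i,j) = (\<Sum>l = 0..<k. M $$ (i,l) * G $$ (l,j))"
    using G M i j by (simp add: scalar_prod_def)
  also have "\<dots> = (\<Sum>l = 0..<k. if l = j then M $$ (i,j) * G $$ (j,j) else 0)"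
    by (rule sum.cong, insert dG G j, auto simp: diagonal_mat_def)
  also have "\<dots> = M $$ (i,j) * G $$ (j,j)" using j by simp
  finally show ?thesis .
qed

lemma spectral_sym:
  fixes A :: "real mat"
  assumes A: "A \<in> carrier_mat n n" and sA: "A\<^sup>T = A"
  shows "\<exists>P D. P \<in> carrier_mat n n \<and> P\<^sup>T * P = 1\<^sub>m n \<and> D \<in> carrier_mat n n \<and> diagonal_mat D \<and> A * P = P * D"
proof -
  have CE: "\<exists>v a c. v \<in> carrier_vec k \<and> v \<noteq> 0\<^sub>v k \<and> A *\<^sub>v v = a \<cdot>\<^sub>v v \<and> C *\<^sub>v v = c \<cdot>\<^sub>v v"
    if "A \<in> carrier_mat k k" "C \<in> carrier_mat k k" "A\<^sup>T = A" "True \<longrightarrow> A = C" "k > 0"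
    for k and A C :: "real mat"
  proof -
    from sym_real_eigenvector[OF that(1,3,5)] obtain v e where "eigenvector A v e" by auto
    thus ?thesis using that unfolding eigenvector_def by auto
  qed
  from joint_diag_gen[of True, OF CE A A sA sA refl] show ?thesis by blast
qed

lemma common_eigvec:
  fixes A C :: "real mat"
  assumes A: "A \<in> carrier_mat k k" and C: "C \<in> carrier_mat k k" and sA: "A\<^sup>T = A" and sC: "C\<^sup>T = C"
    and AC: "A * C = C * A" and k: "k > 0"
  shows "\<exists>v a c. v \<in> carrier_vec k \<and> v \<noteq> 0\<^sub>v k \<and> A *\<^sub>v v = a \<cdot>\<^sub>v v \<and> C *\<^sub>v v = c \<cdot>\<^sub>v v"
proof -
  from spectral_sym[OF A sA] obtain P D where P: "P \<in> carrier_mat k k" and PtP: "P\<^sup>T * P = 1\<^sub>m k"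
    and D: "D \<in> carrier_mat k k" and dD: "diagonal_mat D" and AP: "A * P = P * D" by auto
  have Pt: "P\<^sup>T \<in> carrier_mat k k" using P by auto
  have PPt: "P * P\<^sup>T = 1\<^sub>m k" using mat_mult_left_right_inverse[OF Pt P PtP] .
  define C' where "C' = P\<^sup>T * C * P"
  have C': "C' \<in> carrier_mat k k" unfolding C'_def using P C by auto
  have sC': "C'\<^sup>T = C'"
  proof -
    have "C'\<^sup>T = P\<^sup>T * (P\<^sup>T * C)\<^sup>T" unfolding C'_def using transpose_mult[of "P\<^sup>T * C" k k P k] P C by auto
    also have "(P\<^sup>T * C)\<^sup>T = C\<^sup>T * P" using transpose_mult[of "P\<^sup>T" k k C k] P C by auto
    finally show ?thesis using sC P C unfolding C'_def by (simp add: assoc_mult_mat[of _ k k _ k _ k])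
  qed
  have DPAP: "D = P\<^sup>T * A * P"
  proof -
    have "P\<^sup>T * A * P = P\<^sup>T * (P * D)" using P A AP by simp
    also have "\<dots> = (P\<^sup>T * P) * D" using P D by simp
    finally show ?thesis unfolding PtP using D by simp
  qed
  have CP: "C * P = P * C'"
  proof -
    have "P * C' = (P * P\<^sup>T) * C * P" unfolding C'_def using P C by (simp add: assoc_mult_mat[of _ k k _ k _ k])
    thus ?thesis unfolding PPt using C P by simp
  qed
  have DC: "D * C' = C' * D"
  proof -
    have "D * C' = P\<^sup>T * A * (P * P\<^sup>T) * C * P" unfolding DPAP C'_def using P A C
      by (simp add: assoc_mult_mat[of _ k k _ k _ k])
    also have "\<dots> = P\<^sup>T * (A * C) * P" unfolding PPt using P A C by simp
    also have "\<dots> = P\<^sup>T * (C * A) * P" unfolding AC ..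
    also have "\<dots> = P\<^sup>T * C * (P * P\<^sup>T) * A * P" unfolding PPt using P A C by simp
    also have "\<dots> = C' * D" unfolding DPAP C'_def using P A C
      by (simp add: assoc_mult_mat[of _ k k _ k _ k])
    finally show ?thesis .
  qed
  have DCe: "D $$ (i,i) * C' $$ (i,j) = C' $$ (i,j) * D $$ (j,j)" if "i < k" "j < k" for i j
    using arg_cong[OF DC, of "\<lambda>M. M $$ (i,j)"] diag_mult_left[OF D dD C' that] diag_mult_right[OF D dD C' that]
    by simp
  define d0 where "d0 = D $$ (0,0)"
  define Pi where "Pi = mat k k (\<lambda>(i,j). if i = j \<and> D $$ (i,i) = d0 then 1 else (0::real))"
  have Pi: "Pi \<in> carrier_mat k k" unfolding Pi_def by auto
  have dPi: "diagonal_mat Pi" unfolding Pi_def diagonal_mat_def by auto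
  have PiC: "Pi * C' = C' * Pi"
  proof (rule eq_matI)
    fix i j assume "i < dim_row (C' * Pi)" "j < dim_col (C' * Pi)"
    hence i: "i < k" and j: "j < k" using C' Pi by auto
    have "D $$ (i,i) \<noteq> D $$ (j,j) \<Longrightarrow> C' $$ (i,j) = 0" using DCe[OF i j]
      by (metis mult.commute mult_cancel_left)
    thus "(Pi * C') $$ (i,j) = (C' * Pi) $$ (i,j)"
      unfolding diag_mult_left[OF Pi dPi C' i j] diag_mult_right[OF Pi dPi C' i j]
      using i j unfolding Pi_def by auto
  qed (insert Pi C', auto)
  have DPi: "D * Pi = d0 \<cdot>\<^sub>m Pi"
  proof (rule eq_matI)
    fix i j assume "i < dim_row (d0 \<cdot>\<^sub>m Pi)" "j < dim_col (d0 \<cdot>\<^sub>m Pi)"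
    hence i: "i < k" and j: "j < k" using Pi by auto
    show "(D * Pi) $$ (i,j) = (d0 \<cdot>\<^sub>m Pi) $$ (i,j)"
      unfolding diag_mult_left[OF D dD Pi i j] using i j unfolding Pi_def by auto
  qed (insert Pi D, auto)
  from spectral_sym[OF C' sC'] obtain Q E where Q: "Q \<in> carrier_mat k k" and QtQ: "Q\<^sup>T * Q = 1\<^sub>m k"
    and E: "E \<in> carrier_mat k k" and dE: "diagonal_mat E" and CQ: "C' * Q = Q * E" by auto
  have Qt: "Q\<^sup>T \<in> carrier_mat k k" using Q by auto
  have QQt: "Q * Q\<^sup>T = 1\<^sub>m k" using mat_mult_left_right_inverse[OF Qt Q QtQ] .
  obtain j where j: "j < k" and Q0j: "Q $$ (0,j) \<noteq> 0"
  proof (rule ccontr)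
    assume "\<not> thesis"
    hence z: "\<And>j. j < k \<Longrightarrow> Q $$ (0,j) = 0" using that by blast
    have "(Q * Q\<^sup>T) $$ (0,0) = (\<Sum>l = 0..<k. Q $$ (0,l) * Q $$ (0,l))"
      using Q k by (simp add: scalar_prod_def)
    also have "\<dots> = 0" using z by simp
    finally show False unfolding QQt using k by simp
  qed
  define w where "w = col Q j"
  have w: "w \<in> carrier_vec k" unfolding w_def using Q by auto
  have Cw: "C' *\<^sub>v w = E $$ (j,j) \<cdot>\<^sub>v w"
  proof -
    have "C' *\<^sub>v w = col (C' * Q) j" unfolding w_def using C' Q j by (simp add: mult_mat_vec_def)
    also have "\<dots> = col (Q * E) j" unfolding CQ ..
    also have "\<dots> = E $$ (j,j) \<cdot>\<^sub>v w"
    proof (rule eq_vecI)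
      fix i assume "i < dim_vec (E $$ (j,j) \<cdot>\<^sub>v w)"
      hence i: "i < k" using w by auto
      have "col (Q * E) j $ i = (Q * E) $$ (i,j)" using Q E i j by (subst index_col, auto)
      also have "\<dots> = Q $$ (i,j) * E $$ (j,j)" by (rule diag_mult_right[OF E dE Q i j])
      finally show "col (Q * E) j $ i = (E $$ (j,j) \<cdot>\<^sub>v w) $ i" using i w Q j by (simp add: w_def)
    qed (insert Q E w, auto)
    finally show ?thesis .
  qed
  define u where "u = Pi *\<^sub>v w"
  have u: "u \<in> carrier_vec k" unfolding u_def using Pi w by auto
  have u0: "u $ 0 = Q $$ (0,j)"
  proof -
    have "u $ 0 = (\<Sum>i = 0..<k. Pi $$ (0,i) * Q $$ (i,j))" unfolding u_def w_def using Pi Q k j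
      by (simp add: scalar_prod_def)
    also have "\<dots> = (\<Sum>i = 0..<k. if i = 0 then Q $$ (i,j) else 0)"
      by (rule sum.cong, auto simp: Pi_def d0_def k)
    finally show ?thesis using k by simp
  qed
  have un0: "u \<noteq> 0\<^sub>v k" using u0 Q0j k by auto
  have Cu: "C' *\<^sub>v u = E $$ (j,j) \<cdot>\<^sub>v u"
  proof -
    have "C' *\<^sub>v u = (C' * Pi) *\<^sub>v w" unfolding u_def using C' Pi w by simp
    also have "\<dots> = Pi *\<^sub>v (C' *\<^sub>v w)" unfolding PiC[symmetric] using C' Pi w by simp
    also have "\<dots> = E $$ (j,j) \<cdot>\<^sub>v u" unfolding Cw u_def using Pi w by (simp add: mult_mat_vec)
    finally show ?thesis .
  qed
  have Du: "D *\<^sub>v u = d0 \<cdot>\<^sub>v u"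
  proof -
    have "D *\<^sub>v u = (D * Pi) *\<^sub>v w" unfolding u_def using D Pi w by simp
    also have "\<dots> = d0 \<cdot>\<^sub>v u" unfolding DPi u_def
      by (rule eq_vecI, insert Pi w, auto simp: row_smult smult_scalar_prod_distrib[of _ k])
    finally show ?thesis .
  qed
  define x where "x = P *\<^sub>v u"
  have x: "x \<in> carrier_vec k" unfolding x_def using P u by auto
  have "P\<^sup>T *\<^sub>v x = u" unfolding x_def using P u by (simp flip: assoc_mult_mat_vec add: PtP)
  hence x0: "x \<noteq> 0\<^sub>v k" using un0 Pt by auto
  have Ax: "A *\<^sub>v x = d0 \<cdot>\<^sub>v x"
  proof -
    have "A *\<^sub>v x = (A * P) *\<^sub>v u" unfolding x_def using A P u by simp
    also have "\<dots> = P *\<^sub>v (D *\<^sub>v u)" unfolding AP using P D u by simp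
    finally show ?thesis unfolding Du x_def using P u by (simp add: mult_mat_vec)
  qed
  have Cx: "C *\<^sub>v x = E $$ (j,j) \<cdot>\<^sub>v x"
  proof -
    have "C *\<^sub>v x = (C * P) *\<^sub>v u" unfolding x_def using C P u by simp
    also have "\<dots> = P *\<^sub>v (C' *\<^sub>v u)" unfolding CP using P C' u by simp
    finally show ?thesis unfolding Cu x_def using P u by (simp add: mult_mat_vec)
  qed
  show ?thesis using x x0 Ax Cx by blast
qed

lemma sym_commute_jd:
  fixes A C :: "real mat"
  assumes A: "A \<in> carrier_mat n n" and C: "C \<in> carrier_mat n n" and sA: "A\<^sup>T = A" and sC: "C\<^sup>T = C"
    and AC: "A * C = C * A"
  shows "jointly_diagonalizable A C"
proof -
  have CE: "\<exists>v a c. v \<in> carrier_vec k \<and> v \<noteq> 0\<^sub>v k \<and> A *\<^sub>v v = a \<cdot>\<^sub>v v \<and> C *\<^sub>v v = c \<cdot>\<^sub>v v"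
    if "A \<in> carrier_mat k k" "C \<in> carrier_mat k k" "A\<^sup>T = A" "C\<^sup>T = C" "A * C = C * A" "False \<longrightarrow> A = C" "k > 0"
    for k and A C :: "real mat"
    using common_eigvec[OF that(1-5,7)] .
  have ex: "\<exists>P D E. P \<in> carrier_mat n n \<and> P\<^sup>T * P = 1\<^sub>m n \<and> D \<in> carrier_mat n n \<and> E \<in> carrier_mat n n
      \<and> diagonal_mat D \<and> diagonal_mat E \<and> A * P = P * D \<and> C * P = P * E"
    by (rule joint_diag_gen[of False, OF CE A C sA sC AC], simp_all)
  from ex obtain P D E where
    P: "P \<in> carrier_mat n n" and PtP: "P\<^sup>T * P = 1\<^sub>m n" and D: "D \<in> carrier_mat n n"
    and E: "E \<in> carrier_mat n n" and dD: "diagonal_mat D" and dE: "diagonal_mat E"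
    and AP: "A * P = P * D" and CP: "C * P = P * E" by blast
  have Pt: "P\<^sup>T \<in> carrier_mat n n" using P by auto
  have PPt: "P * P\<^sup>T = 1\<^sub>m n" using mat_mult_left_right_inverse[OF Pt P PtP] .
  have inv: "invertible_mat P"
  proof -
    have "square_mat P" using P by auto
    moreover have "inverts_mat P P\<^sup>T" unfolding inverts_mat_def using P PPt by simp
    moreover have "inverts_mat P\<^sup>T P" unfolding inverts_mat_def using P PtP by simp
    ultimately show ?thesis unfolding invertible_mat_def by blast
  qed
  have ev: "eigenvector M (col P j) (G $$ (j,j))"
    if M: "M \<in> carrier_mat n n" and G: "G \<in> carrier_mat n n" and dG: "diagonal_mat G"
      and MP: "M * P = P * G" and j: "j < n" for M G j
  proof -
    have "(P\<^sup>T * P) $$ (j,j) = col P j \<bullet> col P j" using P j by simp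
    hence "col P j \<bullet> col P j = 1" unfolding PtP using j by simp
    hence nz: "col P j \<noteq> 0\<^sub>v n" using j by (metis scalar_prod_left_zero zero_neq_one col_carrier_vec P)
    have "M *\<^sub>v col P j = col (M * P) j" using M P j by (simp add: mult_mat_vec_def)
    also have "\<dots> = col (P * G) j" unfolding MP ..
    also have "\<dots> = G $$ (j,j) \<cdot>\<^sub>v col P j"
    proof (rule eq_vecI)
      fix i assume "i < dim_vec (G $$ (j,j) \<cdot>\<^sub>v col P j)"
      hence i: "i < n" using P by auto
      have "col (P * G) j $ i = (P * G) $$ (i,j)" using P G i j by (subst index_col, auto)
      also have "\<dots> = P $$ (i,j) * G $$ (j,j)" by (rule diag_mult_right[OF G dG P i j])
      finally show "col (P * G) j $ i = (G $$ (j,j) \<cdot>\<^sub>v col P j) $ i" using i P j by simp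
    qed (insert P G, auto)
    finally have "M *\<^sub>v col P j = G $$ (j,j) \<cdot>\<^sub>v col P j" .
    moreover have "col P j \<in> carrier_vec (dim_row M)" using M P by auto
    moreover have "dim_row M = n" using M by auto
    ultimately show ?thesis unfolding eigenvector_def using nz by simp
  qed
  have "\<forall>j<n. (\<exists>k. eigenvector A (col P j) k) \<and> (\<exists>k. eigenvector C (col P j) k)"
    using ev[OF A D dD AP] ev[OF C E dE CP] by blast
  thus ?thesis unfolding jointly_diagonalizable_def using A C P inv by blast
qed
lemma jd_commute:
  fixes B1 B2 :: "real mat"
  assumes "jointly_diagonalizable B1 B2"
  shows "B1 * B2 = B2 * B1"
proof -
  from assms obtain n P where B1: "B1 \<in> carrier_mat n n" and B2: "B2 \<in> carrier_mat n n"
    and P: "P \<in> carrier_mat n n" and inv: "invertible_mat P"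
    and evs: "\<forall>j<n. (\<exists>k. eigenvector B1 (col P j) k) \<and> (\<exists>k. eigenvector B2 (col P j) k)"
    unfolding jointly_diagonalizable_def by auto
  from inv obtain Pi where i1: "inverts_mat P Pi" and i2: "inverts_mat Pi P"
    unfolding invertible_mat_def by blast
  have PPi: "P * Pi = 1\<^sub>m n" using i1 P unfolding inverts_mat_def by simp
  have PiP: "Pi * P = 1\<^sub>m (dim_row Pi)" using i2 unfolding inverts_mat_def by simp
  have "dim_row Pi = n" using arg_cong[OF PiP, of dim_col] P by simp
  moreover have "dim_col Pi = n" using arg_cong[OF PPi, of dim_col] by simp
  ultimately have Pi: "Pi \<in> carrier_mat n n" by auto
  have PiP: "Pi * P = 1\<^sub>m n" using PiP Pi by auto
  have diagform: "\<exists>D. D \<in> carrier_mat n n \<and> diagonal_mat D \<and> B = P * D * Pi"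
    if B: "B \<in> carrier_mat n n" and ev: "\<forall>j<n. \<exists>k. eigenvector B (col P j) k" for B
  proof -
    from ev obtain f where f: "\<And>j. j < n \<Longrightarrow> eigenvector B (col P j) (f j)" by metis
    define D where "D = mat n n (\<lambda>(i,j). if i = j then f j else (0::real))"
    have D: "D \<in> carrier_mat n n" and dD: "diagonal_mat D" unfolding D_def diagonal_mat_def by auto
    have BP: "B * P = P * D"
    proof (rule eq_matI)
      fix i j assume "i < dim_row (P * D)" "j < dim_col (P * D)"
      hence i: "i < n" and j: "j < n" using P D by auto
      have "(B * P) $$ (i,j) = (B *\<^sub>v col P j) $ i" using B P i j by simp
      also have "\<dots> = f j * P $$ (i,j)" using f[OF j] B P i j unfolding eigenvector_def by simp
      also have "\<dots> = (P * D) $$ (i,j)" unfolding diag_mult_right[OF D dD P i j] using i j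
        by (simp add: D_def)
      finally show "(B * P) $$ (i,j) = (P * D) $$ (i,j)" .
    qed (insert B P D, auto)
    have "B = B * (P * Pi)" unfolding PPi using B by simp
    also have "\<dots> = (B * P) * Pi" using B P Pi by simp
    also have "\<dots> = P * D * Pi" unfolding BP ..
    finally show ?thesis using D dD by blast
  qed
  from diagform[OF B1] evs obtain D1 where D1: "D1 \<in> carrier_mat n n" "diagonal_mat D1" and e1: "B1 = P * D1 * Pi" by blast
  from diagform[OF B2] evs obtain D2 where D2: "D2 \<in> carrier_mat n n" "diagonal_mat D2" and e2: "B2 = P * D2 * Pi" by blast
  have DD: "D1 * D2 = D2 * D1"
  proof (rule eq_matI)
    fix i j assume "i < dim_row (D2 * D1)" "j < dim_col (D2 * D1)"
    hence i: "i < n" and j: "j < n" using D1 D2 by auto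
    show "(D1 * D2) $$ (i,j) = (D2 * D1) $$ (i,j)"
      unfolding diag_mult_left[OF D1 D2(1) i j] diag_mult_left[OF D2 D1(1) i j]
      using D1 D2 i j unfolding diagonal_mat_def by (cases "i = j", auto)
  qed (insert D1 D2, auto)
  have cancel: "Pi * (P * X) = X" if "X \<in> carrier_mat n n" for X
  proof -
    have "Pi * (P * X) = (Pi * P) * X" using Pi P that by simp
    thus ?thesis unfolding PiP using that by simp
  qed
  have prod: "(P * G1 * Pi) * (P * G2 * Pi) = P * (G1 * (G2 * Pi))"
    if G1: "G1 \<in> carrier_mat n n" and G2: "G2 \<in> carrier_mat n n" for G1 G2
  proof -
    have X1: "G1 * Pi \<in> carrier_mat n n" using G1 Pi by simp
    have X2: "G2 * Pi \<in> carrier_mat n n" using G2 Pi by simp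
    have X3: "P * (G2 * Pi) \<in> carrier_mat n n" using mult_carrier_mat[OF P X2] .
    have "(P * G1 * Pi) * (P * G2 * Pi) = (P * (G1 * Pi)) * (P * (G2 * Pi))"
      using assoc_mult_mat[OF P G1 Pi] assoc_mult_mat[OF P G2 Pi] by simp
    also have "\<dots> = P * ((G1 * Pi) * (P * (G2 * Pi)))" by (rule assoc_mult_mat[OF P X1 X3])
    also have "(G1 * Pi) * (P * (G2 * Pi)) = G1 * (Pi * (P * (G2 * Pi)))" by (rule assoc_mult_mat[OF G1 Pi X3])
    also have "Pi * (P * (G2 * Pi)) = G2 * Pi" by (rule cancel[OF X2])
    finally show ?thesis .
  qed
  have "D1 * (D2 * Pi) = D2 * (D1 * Pi)"
    using assoc_mult_mat[OF D1(1) D2(1) Pi, symmetric] assoc_mult_mat[OF D2(1) D1(1) Pi] DD by simp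
  thus ?thesis unfolding e1 e2 prod[OF D1(1) D2(1)] prod[OF D2(1) D1(1)] by simp
qed

lemma submatrix_sym:
  fixes M :: "real mat"
  assumes M: "M \<in> carrier_mat N N" and sM: "M\<^sup>T = M"
  shows "submatrix M I I \<in> carrier_mat (card {i. i < N \<and> i \<in> I}) (card {i. i < N \<and> i \<in> I})"
    and "(submatrix M I I)\<^sup>T = submatrix M I I"
proof -
  show c: "submatrix M I I \<in> carrier_mat (card {i. i < N \<and> i \<in> I}) (card {i. i < N \<and> i \<in> I})"
    using M unfolding carrier_mat_def by (simp add: dim_submatrix)
  have sym: "M $$ (a,b) = M $$ (b,a)" if "a < N" "b < N" for a b
    using arg_cong[OF sM, of "\<lambda>X. X $$ (b,a)"] that M by auto
  show "(submatrix M I I)\<^sup>T = submatrix M I I"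
  proof (rule eq_matI)
    fix i j assume "i < dim_row (submatrix M I I)" "j < dim_col (submatrix M I I)"
    hence i: "i < card {i. i < N \<and> i \<in> I}" and j: "j < card {i. i < N \<and> i \<in> I}" using c by auto
    have pi: "pick I i < N" and pj: "pick I j < N"
      using pick_in_set_le[OF i] pick_in_set_le[OF j] pick_reduce_set[OF i] pick_reduce_set[OF j] by auto
    show "(submatrix M I I)\<^sup>T $$ (i,j) = submatrix M I I $$ (i,j)"
      using i j c M sym[OF pi pj] by (simp add: submatrix_index)
  qed (insert c, auto)
qed

theorem theorem2:
  fixes N :: nat and A C :: "real mat"
  assumes "adjacency_matrix N A"
    and "covariance_matrix N C"
  shows "superstationary N A C \<longleftrightarrow> supercommute N A C"
proof -
  have A: "A \<in> carrier_mat N N" and sA: "A\<^sup>T = A" using assms(1) unfolding adjacency_matrix_def by auto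
  have C: "C \<in> carrier_mat N N" and sC: "C\<^sup>T = C" using assms(2) unfolding covariance_matrix_def by auto
  show ?thesis
  proof
    assume ss: "superstationary N A C"
    show "supercommute N A C" unfolding supercommute_def
    proof (intro conjI allI impI)
      show "A * C = C * A" using jd_commute[of C A] ss unfolding superstationary_def GWSS_def by simp
      fix I assume "I \<subseteq> {0..<N}"
      hence "jointly_diagonalizable (submatrix C I I) (submatrix A I I)"
        using ss unfolding superstationary_def GWSS_def by blast
      from jd_commute[OF this]
      show "submatrix A I I * submatrix C I I = submatrix C I I * submatrix A I I" by simp
    qed
  next
    assume sc: "supercommute N A C"
    show "superstationary N A C" unfolding superstationary_def GWSS_def
    proof (intro conjI allI impI)
      show "jointly_diagonalizable C A"
        by (rule sym_commute_jd[OF C A sC sA], insert sc, simp add: supercommute_def)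
      fix I assume I: "I \<subseteq> {0..<N}"
      show "jointly_diagonalizable (submatrix C I I) (submatrix A I I)"
        by (rule sym_commute_jd[OF submatrix_sym(1)[OF C sC] submatrix_sym(1)[OF A sA]
            submatrix_sym(2)[OF C sC] submatrix_sym(2)[OF A sA]],
            insert sc I, simp add: supercommute_def)
    qed
  qed
qed

end
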